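(* Let $V$ be a real vector space endowed with some topology and $X$ a convex cone in $V$. Suppose $w\in\mathbb{R}$, $f\in P_X$, and $R$ is a locally nonsatiated total relation on $X$. If $C\subseteq X$ is a cone in $V$ and $R$ is $C$-antichain-convex, then $\mathcal{M}(R,B^w_{f,X})$ is a convex $C$-antichain included in $\operatorname{bd}(F^w_f)$.
   Context: A cone in $V$ is a subset $K$ with $\lambda K\subseteq K$ for all $\lambda>0$ (possibly empty, need not contain $0$). $V^*$ denotes the continuous linear functionals on $V$; $P_X=\{f\in V^*: f(x)>0\text{ for all }x\in X\setminus\{0\}\}$; $F^w_f=\{v\in V:f(v)\le w\}$, $B^w_{f,X}=F^w_f\cap X$; $\operatorname{bd}$ is the topological boundary. A set $A$ is $C$-antichain-convex iff for all $x,y\in A$, $\lambda\in[0,1]$ with $y-x\notin C\cup(-C)$, $\lambda x+(1-\lambda)y\in A$; $A$ is a $C$-antichain iff for all distinct $x,y\in A$, $y-x\notin C\cup(-C)$. For a relation $R\subseteq X\times X$, $R(x)=\{t\in X:(t,x)\in R\}$; $R$ is total iff for all $s,t$, $t\in R(s)$ or $s\in R(t)$; $R$ is $C$-antichain-convex iff each $R(x)$ is $C$-antichain-convex; $R$ is locally nonsatiated iff $x\in\operatorname{cl}(\{y\in X:y\in R(x),\ x\notin R(y)\})$ for all $x\in X$. For $S\subseteq X$, $m\in S$ is $R$-maximal on $S$ iff for every $s\in S$ with $s\in R(m)$, $m\in R(s)$; $\mathcal{M}(R,S)$ is the set of these. *)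

theory Defs
  imports "HOL-Analysis.Analysis"
begin

text \<open>Cone in the paper's sense: closed under multiplication by positive scalars
  (possibly empty, need not contain 0).\<close>
definition pcone :: "'a::real_vector set \<Rightarrow> bool" where
  "pcone K \<longleftrightarrow> (\<forall>c::real. c > 0 \<longrightarrow> (\<forall>x\<in>K. c *\<^sub>R x \<in> K))"

definition posfun :: "'a::{real_vector,topological_space} set \<Rightarrow> ('a \<Rightarrow> real) set" where
  "posfun X = {f. linear f \<and> continuous_on UNIV f \<and> (\<forall>x\<in>X - {0}. f x > 0)}"

definition Fset :: "real \<Rightarrow> ('a \<Rightarrow> real) \<Rightarrow> 'a set" where
  "Fset w f = {v. f v \<le> w}"

definition Bset :: "real \<Rightarrow> ('a \<Rightarrow> real) \<Rightarrow> 'a set \<Rightarrow> 'a set" where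
  "Bset w f X = Fset w f \<inter> X"

definition antichain_convex :: "'a::real_vector set \<Rightarrow> 'a set \<Rightarrow> bool" where
  "antichain_convex C A \<longleftrightarrow> (\<forall>x\<in>A. \<forall>y\<in>A. \<forall>c::real. 0 \<le> c \<and> c \<le> 1 \<and>
      y - x \<notin> C \<union> uminus ` C \<longrightarrow> c *\<^sub>R x + (1 - c) *\<^sub>R y \<in> A)"

definition antichain :: "'a::real_vector set \<Rightarrow> 'a set \<Rightarrow> bool" where
  "antichain C A \<longleftrightarrow> (\<forall>x\<in>A. \<forall>y\<in>A. x \<noteq> y \<longrightarrow> y - x \<notin> C \<union> uminus ` C)"

definition rel_at :: "'a set \<Rightarrow> ('a \<times> 'a) set \<Rightarrow> 'a \<Rightarrow> 'a set" where
  "rel_at X R x = {t\<in>X. (t, x) \<in> R}"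

definition rel_total :: "'a set \<Rightarrow> ('a \<times> 'a) set \<Rightarrow> bool" where
  "rel_total X R \<longleftrightarrow> (\<forall>s\<in>X. \<forall>t\<in>X. t \<in> rel_at X R s \<or> s \<in> rel_at X R t)"

definition rel_antichain_convex :: "'a::real_vector set \<Rightarrow> 'a set \<Rightarrow> ('a \<times> 'a) set \<Rightarrow> bool" where
  "rel_antichain_convex C X R \<longleftrightarrow> (\<forall>x\<in>X. antichain_convex C (rel_at X R x))"

definition locally_nonsatiated :: "'a::topological_space set \<Rightarrow> ('a \<times> 'a) set \<Rightarrow> bool" where
  "locally_nonsatiated X R \<longleftrightarrow>
     (\<forall>x\<in>X. x \<in> closure {y\<in>X. y \<in> rel_at X R x \<and> x \<notin> rel_at X R y})"

definition maximal_set :: "'a set \<Rightarrow> ('a \<times> 'a) set \<Rightarrow> 'a set \<Rightarrow> 'a set" where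
  "maximal_set X R S = {m\<in>S. \<forall>s\<in>S. s \<in> rel_at X R m \<longrightarrow> m \<in> rel_at X R s}"

end

theory Submission
  imports Defs
begin

theorem theorem13:
  fixes X C :: "'a::{real_vector,topological_space} set"
    and R :: "('a \<times> 'a) set" and f :: "'a \<Rightarrow> real" and w :: real
  assumes "convex X" and "pcone X"
    and "f \<in> posfun X"
    and "R \<subseteq> X \<times> X"
    and "rel_total X R" and "locally_nonsatiated X R"
    and "C \<subseteq> X" and "pcone C"
    and "rel_antichain_convex C X R"
  shows "convex (maximal_set X R (Bset w f X))
    \<and> antichain C (maximal_set X R (Bset w f X))
    \<and> maximal_set X R (Bset w f X) \<subseteq> frontier (Fset w f)"
proof -
  define M where "M = maximal_set X R (Bset w f X)"
  have lin: "linear f" and cont: "continuous_on UNIV f"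
    and pos: "\<And>x. x \<in> X - {0} \<Longrightarrow> f x > 0"
    using assms(3) unfolding posfun_def by auto
  have Mprop: "m \<in> X \<and> f m \<le> w \<and> (\<forall>s\<in>X. f s \<le> w \<longrightarrow> (s, m) \<in> R \<longrightarrow> (m, s) \<in> R)"
    if "m \<in> M" for m
    using that unfolding M_def maximal_set_def Bset_def Fset_def rel_at_def by auto
  have noopen: False if m: "m \<in> M" and T: "open T" "m \<in> T" "T \<subseteq> Fset w f" for m T
  proof -
    have mX: "m \<in> X" using Mprop[OF m] by auto
    have "m \<in> closure {y\<in>X. y \<in> rel_at X R m \<and> m \<notin> rel_at X R y}"
      using assms(6) mX unfolding locally_nonsatiated_def by auto
    then obtain y where y: "y \<in> T" "y \<in> X" "y \<in> rel_at X R m" "m \<notin> rel_at X R y"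
    proof -
      have "{y\<in>X. y \<in> rel_at X R m \<and> m \<notin> rel_at X R y} \<inter> T \<noteq> {}"
        using \<open>m \<in> closure _\<close> T(1,2) unfolding closure_iff_nhds_not_empty by blast
      then show ?thesis using that by blast
    qed
    then show False using Mprop[OF m] T(3) mX unfolding rel_at_def Fset_def by auto
  qed
  have fw: "f m = w" if m: "m \<in> M" for m
  proof (rule ccontr)
    assume "f m \<noteq> w"
    then have "f m < w" using Mprop[OF m] by auto
    moreover have "open (f -` {..<w})" using open_vimage[OF _ cont] by auto
    moreover have "f -` {..<w} \<subseteq> Fset w f" unfolding Fset_def by auto
    ultimately show False
      using noopen[OF m, of "f -` {..<w}"] by blast
  qed
  have front: "M \<subseteq> frontier (Fset w f)"
  proof
    fix m assume m: "m \<in> M"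
    have "m \<in> Fset w f" using Mprop[OF m] unfolding Fset_def by auto
    hence "m \<in> closure (Fset w f)" using closure_subset by auto
    moreover have "m \<notin> interior (Fset w f)"
      using noopen[OF m] by (metis interior_subset open_interior)
    ultimately show "m \<in> frontier (Fset w f)" unfolding frontier_def by auto
  qed
  have ach: "antichain C M"
    unfolding antichain_def
  proof (intro ballI impI)
    fix x y assume x: "x \<in> M" and y: "y \<in> M" and ne: "x \<noteq> y"
    have d: "f (y - x) = 0" "f (x - y) = 0"
      using fw[OF x] fw[OF y] linear_diff[OF lin] by auto
    show "y - x \<notin> C \<union> uminus ` C"
    proof
      assume "y - x \<in> C \<union> uminus ` C"
      then show False
      proof
        assume "y - x \<in> C"
        then have "f (y - x) > 0" using pos assms(7) ne by auto
        then show False using d by auto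
      next
        assume "y - x \<in> uminus ` C"
        then obtain c where c: "c \<in> C" "y - x = - c" by blast
        then have "x - y = c" by (metis minus_diff_eq minus_minus)
        then have "x - y \<in> C" using c by simp
        then have "f (x - y) > 0" using pos assms(7) ne by auto
        then show False using d by auto
      qed
    qed
  qed
  have cvx: "convex M"
    unfolding convex_alt
  proof (intro ballI allI impI)
    fix x y and u :: real assume x: "x \<in> M" and y: "y \<in> M" and u: "0 \<le> u \<and> u \<le> 1"
    show "(1 - u) *\<^sub>R x + u *\<^sub>R y \<in> M"
    proof (cases "x = y")
      case True
      then show ?thesis using x by (simp add: scaleR_left_distrib[symmetric])
    next
      case False
      have yx: "y - x \<notin> C \<union> uminus ` C" using ach x y False unfolding antichain_def by auto
      let ?z = "(1 - u) *\<^sub>R x + u *\<^sub>R y"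
      have xX: "x \<in> X" and yX: "y \<in> X" using Mprop x y by auto
      have zX: "?z \<in> X" using assms(1) xX yX u unfolding convex_alt by auto
      have fz: "f ?z = w"
      proof -
        have "f ?z = (1 - u) * f x + u * f y"
          using linear_add[OF lin] linear_scale[OF lin] by simp
        also have "\<dots> = w" using fw[OF x] fw[OF y] by (simp add: algebra_simps)
        finally show ?thesis .
      qed
      have inR: "(x, s) \<in> R" if m: "x \<in> M" and s: "s \<in> X" "f s \<le> w" for x s
      proof (rule ccontr)
        assume "(x, s) \<notin> R"
        then have "(s, x) \<in> R" using assms(5) s Mprop[OF m]
          unfolding rel_total_def rel_at_def by auto
        then show False using Mprop[OF m] s \<open>(x, s) \<notin> R\<close> by auto
      qed
      have "?z \<in> rel_at X R s" if s: "s \<in> X" "f s \<le> w" for s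
      proof -
        have "antichain_convex C (rel_at X R s)" using assms(9) s unfolding rel_antichain_convex_def by auto
        hence ac: "\<And>a b c. a \<in> rel_at X R s \<Longrightarrow> b \<in> rel_at X R s \<Longrightarrow> 0 \<le> c \<Longrightarrow> c \<le> 1
            \<Longrightarrow> b - a \<notin> C \<union> uminus ` C \<Longrightarrow> c *\<^sub>R a + (1 - c) *\<^sub>R b \<in> rel_at X R s"
          unfolding antichain_convex_def by blast
        have "x \<in> rel_at X R s" "y \<in> rel_at X R s"
          using inR[OF x s] inR[OF y s] xX yX unfolding rel_at_def by auto
        from ac[OF this, of "1 - u"] have "(1 - u) *\<^sub>R x + (1 - (1 - u)) *\<^sub>R y \<in> rel_at X R s"
          using yx u by simp
        then show ?thesis by simp
      qed
      then show ?thesis using zX fz unfolding M_def maximal_set_def Bset_def Fset_def rel_at_def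
        by auto
    qed
  qed
  show ?thesis using cvx ach front unfolding M_def by auto
qed

end
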